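(* Consider the generative logic with $\mu\to1$ in the setting below. Let $\Delta$ be a finite multiset of time-indexed formulas such that $E'(\Delta)=\emptyset$. Then for every $k\in\{1,\dots,K\}$, $p(D=d_k\mid\Delta)=p(D=d_k)=1/K$.
   Context: Let $\mathcal{L}$ be a propositional language and let $K,T\ge1$. There are data sequences $d_1,\dots,d_K$; repetitions are allowed, and data are identified by their index $k$. Each $d_k$ is associated with a sequence of models $m(d_k)=(m(d_k)^1,\dots,m(d_k)^T)$ of $\mathcal{L}$. The prior is $p(D=d_k)=1/K$. A time-indexed formula is written $\alpha^t$, with $\alpha\in\mathcal{L}$ and $1\le t\le T$. Write $[\![\alpha^t]\!]_k=1$ if $\alpha$ is true in $m(d_k)^t$, and $0$ otherwise. For $\mu\in(0,1)$ and a finite multiset $X$ of time-indexed formulas, define $$p(X\mid d_k,\mu)=\prod_{\alpha^t\in X}\mu^{[\![\alpha^t]\!]_k}(1-\mu)^{1-[\![\alpha^t]\!]_k}.$$ Then define $$p(D=d_k\mid\Delta)=\lim_{\mu\to1}\frac{p(\Delta\mid d_k,\mu)\,p(d_k)}{\sum_j p(\Delta\mid d_j,\mu)\,p(d_j)}.$$ An index $k$ is an evidence of $X$ if $[\![\alpha^t]\!]_k=1$ for all $\alpha^t\in X$. Let $E(X)$ be the set of such indices. $X$ is called founded if $E(X)\neq\emptyset$. Let $MFS(\Delta)$ be the set of nonempty founded sub-multisets $S\subseteq\Delta$ that have maximum cardinality among all nonempty founded sub-multisets of $\Delta$. Set $E'(\Delta)=\bigcup_{S\in MFS(\Delta)}E(S)$.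 This union is empty if $MFS(\Delta)=\emptyset$. Thus $E'(\Delta)=\emptyset$ iff no index is an evidence of any singleton of $\Delta$. *)

theory Defs
  imports "HOL-Analysis.Analysis" "HOL-Library.Multiset"
begin

text \<open>The data d_1..d_K are identified by their index k;
  mdl k t is the model m(d_k)^t.  A time-indexed formula alpha^t is a pair (alpha, t).\<close>

definition truth :: "('m \<Rightarrow> 'f \<Rightarrow> bool) \<Rightarrow> (nat \<Rightarrow> nat \<Rightarrow> 'm) \<Rightarrow> nat \<Rightarrow> 'f \<times> nat \<Rightarrow> nat" where
  "truth sat mdl k x = (if sat (mdl k (snd x)) (fst x) then 1 else 0)"

definition lik :: "('m \<Rightarrow> 'f \<Rightarrow> bool) \<Rightarrow> (nat \<Rightarrow> nat \<Rightarrow> 'm) \<Rightarrow> ('f \<times> nat) multiset \<Rightarrow> nat \<Rightarrow> real \<Rightarrow> real" where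
  "lik sat mdl X k \<mu> =
     (\<Prod>x\<in>#X. \<mu> ^ truth sat mdl k x * (1 - \<mu>) ^ (1 - truth sat mdl k x))"

definition prior :: "nat \<Rightarrow> nat \<Rightarrow> real" where
  "prior K k = 1 / real K"

text \<open>The ratio inside the limit defining p(D = d_k | Delta).\<close>
definition post_ratio :: "('m \<Rightarrow> 'f \<Rightarrow> bool) \<Rightarrow> (nat \<Rightarrow> nat \<Rightarrow> 'm) \<Rightarrow> nat \<Rightarrow> ('f \<times> nat) multiset \<Rightarrow> nat \<Rightarrow> real \<Rightarrow> real" where
  "post_ratio sat mdl K \<Delta> k \<mu> =
     lik sat mdl \<Delta> k \<mu> * prior K k / (\<Sum>j\<in>{1..K}. lik sat mdl \<Delta> j \<mu> * prior K j)"

definition evidence :: "('m \<Rightarrow> 'f \<Rightarrow> bool) \<Rightarrow> (nat \<Rightarrow> nat \<Rightarrow> 'm) \<Rightarrow> nat \<Rightarrow> ('f \<times> nat) multiset \<Rightarrow> nat set" where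
  "evidence sat mdl K X = {k \<in> {1..K}. \<forall>x\<in>#X. sat (mdl k (snd x)) (fst x)}"

definition founded :: "('m \<Rightarrow> 'f \<Rightarrow> bool) \<Rightarrow> (nat \<Rightarrow> nat \<Rightarrow> 'm) \<Rightarrow> nat \<Rightarrow> ('f \<times> nat) multiset \<Rightarrow> bool" where
  "founded sat mdl K X \<longleftrightarrow> evidence sat mdl K X \<noteq> {}"

definition MFS :: "('m \<Rightarrow> 'f \<Rightarrow> bool) \<Rightarrow> (nat \<Rightarrow> nat \<Rightarrow> 'm) \<Rightarrow> nat \<Rightarrow> ('f \<times> nat) multiset \<Rightarrow> ('f \<times> nat) multiset set" where
  "MFS sat mdl K \<Delta> = {S. S \<subseteq># \<Delta> \<and> S \<noteq> {#} \<and> founded sat mdl K S \<and>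
     (\<forall>S'. S' \<subseteq># \<Delta> \<and> S' \<noteq> {#} \<and> founded sat mdl K S' \<longrightarrow> size S' \<le> size S)}"

definition evidence' :: "('m \<Rightarrow> 'f \<Rightarrow> bool) \<Rightarrow> (nat \<Rightarrow> nat \<Rightarrow> 'm) \<Rightarrow> nat \<Rightarrow> ('f \<times> nat) multiset \<Rightarrow> nat set" where
  "evidence' sat mdl K \<Delta> = (\<Union>S\<in>MFS sat mdl K \<Delta>. evidence sat mdl K S)"

end

theory Submission
  imports Defs
begin

lemma no_sat:
  assumes "evidence' sat mdl K \<Delta> = {}" and "x \<in># \<Delta>" and "j \<in> {1..K}"
  shows "\<not> sat (mdl j (snd x)) (fst x)"
proof
  assume s: "sat (mdl j (snd x)) (fst x)"
  define A where "A = {S. S \<subseteq># \<Delta> \<and> S \<noteq> {#} \<and> founded sat mdl K S}"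
  have xA: "{#x#} \<in> A" using s assms(2,3)
    by (auto simp: A_def founded_def evidence_def)
  have fin: "finite (size ` A)"
    by (rule finite_subset[of _ "{..size \<Delta>}"]) (auto simp: A_def size_mset_mono)
  define n where "n = Max (size ` A)"
  have "n \<in> size ` A" unfolding n_def using fin xA by (intro Max_in) auto
  then obtain S where S: "S \<in> A" "size S = n" by auto
  have "S \<in> MFS sat mdl K \<Delta>"
    using S fin unfolding MFS_def A_def n_def by (auto intro: Max_ge)
  moreover have "evidence sat mdl K S \<noteq> {}" using S(1) by (auto simp: A_def founded_def)
  ultimately show False using assms(1) unfolding evidence'_def by auto
qed

theorem theorem4:
  fixes sat :: "'m \<Rightarrow> 'f \<Rightarrow> bool" and mdl :: "nat \<Rightarrow> nat \<Rightarrow> 'm"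
    and K T :: nat and \<Delta> :: "('f \<times> nat) multiset" and k :: nat
  assumes "K \<ge> 1" and "T \<ge> 1"
    and "\<forall>x\<in>#\<Delta>. 1 \<le> snd x \<and> snd x \<le> T"
    and "evidence' sat mdl K \<Delta> = {}"
    and "k \<in> {1..K}"
  shows "(post_ratio sat mdl K \<Delta> k \<longlongrightarrow> prior K k) (at_left 1) \<and> prior K k = 1 / real K"
proof -
  have lik: "lik sat mdl \<Delta> j \<mu> = (1 - \<mu>) ^ size \<Delta>" if "j \<in> {1..K}" for j \<mu>
  proof -
    have "lik sat mdl \<Delta> j \<mu> = (\<Prod>x\<in>#\<Delta>. (1 - \<mu>))"
      unfolding lik_def
      by (rule arg_cong[where f=prod_mset], rule image_mset_cong)
         (use no_sat[OF assms(4) _ that] in \<open>auto simp: truth_def\<close>)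
    also have "\<dots> = (1 - \<mu>) ^ size \<Delta>" by (simp)
    finally show ?thesis .
  qed
  have eq: "post_ratio sat mdl K \<Delta> k \<mu> = prior K k" if "\<mu> < 1" for \<mu>
  proof -
    have "post_ratio sat mdl K \<Delta> k \<mu> = (1 - \<mu>) ^ size \<Delta> * (1 / real K) /
        (real K * ((1 - \<mu>) ^ size \<Delta> * (1 / real K)))"
      unfolding post_ratio_def prior_def using assms(5) by (simp add: lik)
    also have "\<dots> = 1 / real K" using that assms(1) by (simp add: field_simps)
    finally show ?thesis by (simp add: prior_def)
  qed
  have ev: "eventually (\<lambda>\<mu>. prior K k = post_ratio sat mdl K \<Delta> k \<mu>) (at_left (1::real))"
    by (rule eventually_at_leftI[of 0]) (auto simp: eq)
  show ?thesis
    by (rule conjI, rule tendsto_eventually[OF ev[THEN eventually_mono]])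
       (auto simp: prior_def)
qed

end
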